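(* Let $-3<c<-2$, $k=k(c)$, and put $F_c(z)=D_c(2z)=1+\sum_{n\ge1}\frac{z^n}{r_1(c)\cdots r_n(c)}$ and $M_c(z)=\frac{z^k}{r_1(c)\cdots r_k(c)}$. Then for every $z$ with $4r_k(c)<|z|<9r_k(c)$, $$\left|1-\frac{F_c(z)}{M_c(z)}\right|\le\frac23 .$$
   Context: For real $c<-2$ let $f_c(z)=z^2+c$ and $r_n(c)=f_c^{\circ n}(0)$, so $r_1(c)=c$ and $r_{n+1}(c)=r_n(c)^2+c$; $D_c(\lambda)=1+\sum_{n=1}^{\infty}\frac{\lambda^n}{2^n r_1(c)\cdots r_n(c)}$. For $-3<c<-2$, $k(c)$ denotes the smallest positive integer $k$ such that $r_{k+1}(c)/r_k(c)\ge 36$. *)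

theory Defs
  imports Complex_Main
begin

text \<open>r_n(c) = f_c^n(0), with r_1(c) = c and r_(n+1)(c) = r_n(c)^2 + c.
  We set r_0(c) = 0 (the 0-th iterate), consistent with r_1 = 0^2 + c.\<close>
fun r :: "nat \<Rightarrow> real \<Rightarrow> real" where
  "r 0 c = 0"
| "r (Suc n) c = (r n c)^2 + c"

definition D :: "real \<Rightarrow> complex \<Rightarrow> complex" where
  "D c lam = 1 + (\<Sum>n. lam ^ (Suc n) /
      complex_of_real (2 ^ (Suc n) * (\<Prod>i\<in>{1..Suc n}. r i c)))"

definition kc :: "real \<Rightarrow> nat" where
  "kc c = (LEAST k. 0 < k \<and> r (k+1) c / r k c \<ge> 36)"

definition F :: "real \<Rightarrow> complex \<Rightarrow> complex" where
  "F c z = D c (2 * z)"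

definition M :: "real \<Rightarrow> complex \<Rightarrow> complex" where
  "M c z = z ^ (kc c) / complex_of_real (\<Prod>i\<in>{1..kc c}. r i c)"

end

theory Submission
  imports Defs
begin

lemma r2: "r 2 c = c^2 + c"
  by (simp add: numeral_2_eq_2)

lemma delta_pos:
  fixes c :: real assumes "c < -2" shows "(r 2 c)^2 - r 2 c + c > 0"
proof -
  have e: "(r 2 c)^2 - r 2 c + c = c^3*(c+2)" by (simp add: r2 power2_eq_square power3_eq_cube algebra_simps)
  have "c^3 < 0" using assms by (simp add: power3_eq_cube mult_neg_pos zero_less_mult_iff mult_less_0_iff)
  thus ?thesis unfolding e using assms by (simp add: mult_neg_neg)
qed

lemma r2_gt: fixes c :: real assumes "c < -2" shows "r 2 c > 2"
proof -
  have "(c+2)*(c-1) > 0" using assms by (intro mult_neg_neg) auto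
  thus ?thesis by (simp add: r2 power2_eq_square algebra_simps)
qed

lemma r_grow:
  fixes c :: real
  assumes "c < -2"
  shows "r (n+2) c \<ge> r 2 c + real n * ((r 2 c)^2 - r 2 c + c)"
proof (induction n)
  case 0 then show ?case by (simp add: r2)
next
  case (Suc n)
  define x where "x = r (n+2) c"
  define y where "y = r 2 c"
  have y2: "y > 2" using r2_gt[OF assms] y_def by simp
  have d: "y^2 - y + c > 0" using delta_pos[OF assms] y_def by simp
  have IH: "x \<ge> y + real n * (y^2 - y + c)" using Suc x_def y_def by simp
  have xy: "x \<ge> y" using IH d by (smt (verit) mult_nonneg_nonneg of_nat_0_le_iff)
  have "x^2 - x - (y^2 - y) = (x-y)*(x+y-1)" by (simp add: power2_eq_square algebra_simps)
  also have "\<dots> \<ge> 0" using xy y2 by simp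
  finally have "x^2 + c \<ge> x + (y^2 - y + c)" by simp
  moreover have "r (Suc n + 2) c = x^2 + c" by (simp add: x_def)
  ultimately show ?case using IH unfolding y_def[symmetric] by (simp add: algebra_simps)
qed

lemma r_mono_step:
  fixes c :: real
  assumes "c < -2" "n \<ge> 2"
  shows "r n c \<le> r (Suc n) c"
proof -
  obtain m where n: "n = m + 2" using assms(2) by (metis add.commute le_Suc_ex)
  define x where "x = r n c"
  define y where "y = r 2 c"
  have y2: "y > 2" using r2_gt[OF assms(1)] y_def by simp
  have d: "y^2 - y + c > 0" using delta_pos[OF assms(1)] y_def by simp
  have xy: "x \<ge> y" using r_grow[OF assms(1), of m] d n x_def y_def
    by (smt (verit) mult_nonneg_nonneg of_nat_0_le_iff)
  have "x^2 - x - (y^2 - y) = (x-y)*(x+y-1)" by (simp add: power2_eq_square algebra_simps)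
  also have "\<dots> \<ge> 0" using xy y2 by simp
  finally have "x^2 + c \<ge> x" using d by simp
  thus ?thesis by (simp add: x_def)
qed

lemma r_mono:
  fixes c :: real
  assumes "c < -2" "2 \<le> i" "i \<le> j"
  shows "r i c \<le> r j c"
  using assms(3)
proof (induction j rule: dec_induct)
  case base then show ?case by simp
next
  case (step j) then show ?case using r_mono_step[OF assms(1), of j] assms(2) by simp
qed

lemma k_exists:
  fixes c :: real
  assumes "c < -2"
  shows "\<exists>k. 0 < k \<and> r (k+1) c / r k c \<ge> 36"
proof -
  define d where "d = (r 2 c)^2 - r 2 c + c"
  have d: "d > 0" using delta_pos[OF assms] d_def by simp
  obtain n :: nat where n: "real n > (40 - c) / d" using reals_Archimedean2 by blast
  have "real n * d > 40 - c" using n d by (simp add: field_simps)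
  hence x: "r (n+2) c \<ge> 40 - c" using r_grow[OF assms, of n] r2_gt[OF assms] d_def by simp
  define x where "x = r (n+2) c"
  have x1: "x \<ge> 40 - c" using x x_def by simp
  have "x * (x - 36) \<ge> x * 4" using x1 assms by (intro mult_left_mono) auto
  moreover have "x * (x - 36) = x^2 - 36*x" by (simp add: power2_eq_square algebra_simps)
  ultimately have "x^2 + c \<ge> 36 * x" using x1 assms by linarith
  moreover have "r (n+2+1) c = x^2 + c" unfolding x_def by (simp only: Suc_eq_plus1[symmetric] r.simps)
  ultimately have a: "r (n+2+1) c \<ge> 36 * x" by simp
  have dv: "\<And>a b::real. b > 0 \<Longrightarrow> a \<ge> 36*b \<Longrightarrow> a/b \<ge> 36" by (simp add: field_simps)
  have "r (n+2+1) c / r (n+2) c \<ge> 36" unfolding x_def[symmetric] using dv[OF _ a] x1 assms by simp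
  thus ?thesis by (intro exI[of _ "n+2"]) simp
qed

lemma k_props:
  fixes c :: real
  assumes "c < -2" "-3 < c"
  shows "kc c \<ge> 2" "r (kc c) c > 36" "r (kc c + 1) c \<ge> 36 * r (kc c) c"
proof -
  define k where "k = kc c"
  have P: "0 < k \<and> r (k+1) c / r k c \<ge> 36"
    unfolding k_def kc_def using LeastI_ex[OF k_exists[OF assms(1)]] by blast
  have k2: "k \<ge> 2"
  proof (rule ccontr)
    assume "\<not> k \<ge> 2" hence "k = 1" using P by simp
    hence "r (k+1) c / r k c = (c^2+c)/c" by (simp add: r2[symmetric] numeral_2_eq_2)
    also have "\<dots> < 0" using assms r2_gt[OF assms(1)] by (simp add: r2 divide_pos_neg)
    finally show False using P by simp
  qed
  have pos: "r k c > 2" using r_mono[OF assms(1) order.refl k2] r2_gt[OF assms(1)] by simp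
  have ge: "r (k+1) c \<ge> 36 * r k c" using P pos by (simp add: field_simps)
  then have "(r k c)^2 + c \<ge> 36 * r k c" by simp
  then have "r k c * r k c > 36 * r k c" using assms by (simp add: power2_eq_square)
  then have "r k c > 36" using pos by simp
  then show "kc c \<ge> 2" "r (kc c) c > 36" "r (kc c + 1) c \<ge> 36 * r (kc c) c"
    using k2 ge k_def by auto
qed


lemma geo_fin: "(\<Sum>i<k. (1/4::real)^(k-i)) = (1 - (1/4)^k)/3"
proof (induction k)
  case 0 then show ?case by simp
next
  case (Suc k)
  have "(\<Sum>i<k. (1/4::real)^(Suc k-i)) = (1/4) * (\<Sum>i<k. (1/4::real)^(k-i))"
    by (simp add: sum_distrib_left Suc_diff_le less_imp_le)
  then show ?case using Suc by (simp add: field_simps)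
qed

lemma geo_fin_le: "(\<Sum>i<k. (1/4::real)^(k-i)) \<le> 1/3"
  unfolding geo_fin by simp

theorem mainTheorem7:
  fixes c :: real and z :: complex
  assumes "-3 < c" and "c < -2"
    and "4 * r (kc c) c < cmod z" and "cmod z < 9 * r (kc c) c"
  shows "cmod (1 - F c z / M c z) \<le> 2/3"
proof -
  define k where "k = kc c"
  define P where "P n = (\<Prod>i\<in>{1..n}. r i c)" for n
  define a where "a n = z^n / complex_of_real (P n)" for n
  define b where "b n = a n / a k" for n
  have k2: "k \<ge> 2" and rk: "r k c > 36" and rk1: "r (k+1) c \<ge> 36 * r k c"
    using k_props[OF assms(2,1)] k_def by auto
  have z1: "4 * r k c < cmod z" and z2: "cmod z < 9 * r k c" using assms k_def by auto
  have zne: "z \<noteq> 0" using z1 rk by auto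
  have rne: "r i c \<noteq> 0" if "i \<ge> 1" for i
  proof (cases "i = 1")
    case True then show ?thesis using assms by simp
  next
    case False then have "i \<ge> 2" using that by simp
    then show ?thesis using r_mono[OF assms(2) order.refl, of i] r2_gt[OF assms(2)] by simp
  qed
  have Pne: "P n \<noteq> 0" for n unfolding P_def using rne by (simp add: prod_zero_iff)
  have Psuc: "P (Suc n) = P n * r (Suc n) c" for n unfolding P_def by simp
  have asuc: "a (Suc n) = a n * z / complex_of_real (r (Suc n) c)" for n
    unfolding a_def Psuc using Pne[of n] rne[of "Suc n"] by (simp add: field_simps)
  have ak: "a k \<noteq> 0" unfolding a_def using zne Pne by simp
  have bk: "b k = 1" unfolding b_def using ak by simp
  have bsuc: "b (Suc n) = b n * z / complex_of_real (r (Suc n) c)" for n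
    unfolding b_def asuc by simp
  have upper: "norm (b (k + j)) \<le> (1/4)^j" for j
  proof (induction j)
    case 0 then show ?case using bk by simp
  next
    case (Suc j)
    have rr: "r (Suc (k+j)) c \<ge> 36 * r k c"
      using r_mono[OF assms(2), of "k+1" "Suc (k+j)"] k2 rk1 by simp
    have rp: "r (Suc (k+j)) c > 0" using rr rk by simp
    have q: "cmod z / r (Suc (k+j)) c \<le> 1/4" using rr rp z2 by (simp add: field_simps)
    have "norm (b (k + Suc j)) = norm (b (k+j)) * (cmod z / r (Suc (k+j)) c)"
      using bsuc[of "k+j"] rp by (simp add: norm_mult norm_divide del: r.simps)
    also have "\<dots> \<le> (1/4)^j * (1/4)"
      using Suc q rp by (intro mult_mono) (auto simp del: r.simps)
    finally show ?case by simp
  qed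
  have lower: "j \<le> k \<Longrightarrow> norm (b (k - j)) \<le> (1/4)^j" for j
  proof (induction j)
    case 0 then show ?case using bk by simp
  next
    case (Suc j)
    define m where "m = k - Suc j"
    have m: "Suc m = k - j" using Suc.prems m_def by simp
    have rle: "\<bar>r (Suc m) c\<bar> \<le> r k c"
    proof (cases "Suc m = 1")
      case True then show ?thesis using rk assms by simp
    next
      case False then show ?thesis
        using r_mono[OF assms(2), of "Suc m" k] r2_gt[OF assms(2)] r_mono[OF assms(2), of 2 "Suc m"] m
        by simp
    qed
    have hh: "\<And>x y Z::real. x \<le> y \<Longrightarrow> 4*y < Z \<Longrightarrow> 0 < y \<Longrightarrow> x / Z \<le> 1/4"
      by (simp add: field_simps)
    have q: "\<bar>r (Suc m) c\<bar> / cmod z \<le> 1/4" using hh[OF rle z1] rk by simp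
    have "b m = b (Suc m) * complex_of_real (r (Suc m) c) / z"
      using bsuc[of m] rne[of "Suc m"] zne by (simp add: field_simps del: r.simps)
    hence "norm (b m) = norm (b (Suc m)) * (\<bar>r (Suc m) c\<bar> / cmod z)"
      by (simp add: norm_mult norm_divide del: r.simps)
    also have "\<dots> \<le> (1/4)^j * (1/4)"
      using Suc q m by (intro mult_mono) (auto simp del: r.simps)
    finally show ?case using m_def by simp
  qed
  have sb: "summable b"
  proof -
    have "summable (\<lambda>j. b (j + k))"
      by (rule summable_comparison_test'[where g="\<lambda>j. (1/4::real)^j" and N=0])
        (use upper in \<open>auto simp: add.commute summable_geometric\<close>)
    thus ?thesis by simp
  qed
  have sa: "summable a"
  proof -
    have "summable (\<lambda>n. b n * a k)" using sb by (rule summable_mult2)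
    moreover have "b n * a k = a n" for n unfolding b_def using ak by simp
    ultimately show ?thesis by simp
  qed
  have Fa: "F c z = suminf a"
  proof -
    have "(2*z) ^ Suc n / complex_of_real (2 ^ Suc n * (\<Prod>i\<in>{1..Suc n}. r i c)) = a (Suc n)" for n
      unfolding a_def P_def by (simp add: power_mult_distrib)
    hence "F c z = 1 + (\<Sum>n. a (Suc n))" unfolding F_def D_def by simp
    also have "\<dots> = suminf a" using suminf_split_head[OF sa] by (simp add: a_def P_def)
    finally show ?thesis .
  qed
  have Ma: "M c z = a k" unfolding M_def a_def P_def k_def by simp
  have FM: "F c z / M c z = suminf b" unfolding Fa Ma b_def using suminf_divide[OF sa] by simp
  define T where "T = (\<Sum>n. b (n + Suc k))"
  define S where "S = (\<Sum>i<k. b i)"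
  have "suminf b = T + (\<Sum>i<Suc k. b i)" unfolding T_def by (rule suminf_split_initial_segment[OF sb])
  hence sbTS: "suminf b = T + S + 1" unfolding S_def using bk by simp
  have nT: "norm T \<le> 1/3"
  proof -
    have gs: "(\<lambda>n. (1/4) * (1/4::real)^n) sums ((1/4) * (1 / (1 - 1/4)))"
      by (intro sums_mult geometric_sums) simp
    have "norm T \<le> (\<Sum>n. (1/4) * (1/4::real)^n)"
      unfolding T_def
    proof (rule norm_suminf_le)
      fix n show "norm (b (n + Suc k)) \<le> (1/4) * (1/4::real)^n"
        using upper[of "Suc n"] by (simp add: add.commute)
    qed (use gs sums_summable in blast)
    also have "\<dots> = 1/3" using gs sums_unique by fastforce
    finally show ?thesis .
  qed
  have nS: "norm S \<le> 1/3"
  proof -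
    have "norm S \<le> (\<Sum>i<k. norm (b i))" unfolding S_def by (rule norm_sum)
    also have "\<dots> \<le> (\<Sum>i<k. (1/4::real)^(k-i))"
    proof (rule sum_mono)
      fix i assume "i \<in> {..<k}"
      then show "norm (b i) \<le> (1/4)^(k-i)" using lower[of "k-i"] by simp
    qed
    also have "\<dots> \<le> 1/3" by (rule geo_fin_le)
    finally show ?thesis .
  qed
  have "1 - F c z / M c z = - (T + S)" using FM sbTS by simp
  hence "cmod (1 - F c z / M c z) = norm (T + S)" by (simp only: norm_minus_cancel)
  also have "\<dots> \<le> norm T + norm S" by (rule norm_triangle_ineq)
  finally show ?thesis using nT nS by simp
qed

end
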